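(* Let $K\subset\mathbb{R}^n$ be a nonempty compact set and $H$ a linear subspace of $\mathbb{R}^n$ with $1\le\dim H\le n-1$. Then the sequence $K_m:=M_H^mK$ ($M_H$ applied $m$ times) converges in the Hausdorff metric to the $H$-symmetric compact convex set \[L=\mathrm{conv}(M_HK).\]
   Context: For a linear subspace $H$, $R_Hx=2(x|H)-x$ is the reflection with respect to $H$ ($x|H$ the orthogonal projection). The Minkowski symmetrization is $M_HC:=\frac12(C+R_HC)$, with Minkowski sum $X+Y=\{x+y:x\in X,y\in Y\}$ and $tX=\{tx:x\in X\}$. $M_H^m=M_H\circ\cdots\circ M_H$ ($m$ times). $\mathrm{conv}$ denotes convex hull. *)

theory Defs
  imports "HOL-Analysis.Analysis"
begin

definition orth_proj :: "'a::euclidean_space set \<Rightarrow> 'a \<Rightarrow> 'a" where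
  "orth_proj H x = (THE y. y \<in> H \<and> (\<forall>h\<in>H. (x - y) \<bullet> h = 0))"

definition refl_sub :: "'a::euclidean_space set \<Rightarrow> 'a \<Rightarrow> 'a" where
  "refl_sub H x = 2 *\<^sub>R orth_proj H x - x"

definition mink_sum :: "'a::real_vector set \<Rightarrow> 'a set \<Rightarrow> 'a set" where
  "mink_sum X Y = {x + y | x y. x \<in> X \<and> y \<in> Y}"

definition set_scale :: "real \<Rightarrow> 'a::real_vector set \<Rightarrow> 'a set" where
  "set_scale t X = {t *\<^sub>R x | x. x \<in> X}"

definition mink_sym :: "'a::euclidean_space set \<Rightarrow> 'a set \<Rightarrow> 'a set" where
  "mink_sym H C = set_scale (1/2) (mink_sum C (refl_sub H ` C))"

definition hausdorff_dist :: "'a::metric_space set \<Rightarrow> 'a set \<Rightarrow> real" where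
  "hausdorff_dist A B = max (SUP a\<in>A. infdist a B) (SUP b\<in>B. infdist b A)"

end

theory Submission imports Defs begin

lemma orth_proj_char:
  fixes H :: "'a::euclidean_space set"
  assumes "subspace H"
  shows "orth_proj H x \<in> H \<and> (\<forall>h\<in>H. (x - orth_proj H x) \<bullet> h = 0)"
proof -
  obtain y z where y: "y \<in> span H" and z: "\<And>w. w \<in> span H \<Longrightarrow> orthogonal z w" and xy: "x = y + z"
    using orthogonal_subspace_decomp_exists by blast
  have P: "y \<in> H \<and> (\<forall>h\<in>H. (x - y) \<bullet> h = 0)"
  proof -
    have sH: "span H = H" using assms by (simp add: span_eq_iff)
    have "y \<in> H" using y sH by simp
    moreover have "\<forall>h\<in>H. (x - y) \<bullet> h = 0"
    proof
      fix h assume "h \<in> H"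
      hence "h \<in> span H" by (rule span_base)
      thus "(x - y) \<bullet> h = 0" using z xy by (simp add: orthogonal_def)
    qed
    ultimately show ?thesis by blast
  qed
  have U: "y' = y" if "y' \<in> H \<and> (\<forall>h\<in>H. (x - y') \<bullet> h = 0)" for y'
  proof -
    have "y - y' \<in> H" using that P assms subspace_diff by blast
    have "(x - y') \<bullet> (y - y') - (x - y) \<bullet> (y - y') = 0" using that P \<open>y - y' \<in> H\<close> by auto
    hence "(y - y') \<bullet> (y - y') = 0" by (simp add: algebra_simps inner_diff_left inner_diff_right)
    thus ?thesis by simp
  qed
  have "orth_proj H x = y" unfolding orth_proj_def
    using P U by (rule the_equality) 
  thus ?thesis using P by simp
qed

lemma orth_proj_unique:
  fixes H :: "'a::euclidean_space set"
  assumes "subspace H" "y \<in> H" "\<forall>h\<in>H. (x - y) \<bullet> h = 0"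
  shows "orth_proj H x = y"
proof -
  have P: "orth_proj H x \<in> H \<and> (\<forall>h\<in>H. (x - orth_proj H x) \<bullet> h = 0)" using orth_proj_char[OF assms(1)] .
  have "y - orth_proj H x \<in> H" using P assms subspace_diff by blast
  have "(x - orth_proj H x) \<bullet> (y - orth_proj H x) - (x - y) \<bullet> (y - orth_proj H x) = 0"
    using assms P \<open>y - orth_proj H x \<in> H\<close> by auto
  hence "(y - orth_proj H x) \<bullet> (y - orth_proj H x) = 0" by (simp add: algebra_simps inner_diff_left inner_diff_right)
  thus ?thesis by simp
qed

lemma orth_proj_linear:
  fixes H :: "'a::euclidean_space set"
  assumes "subspace H"
  shows "linear (orth_proj H)"
proof (rule linearI)
  fix x y :: 'a
  have a: "orth_proj H x \<in> H \<and> (\<forall>h\<in>H. (x - orth_proj H x) \<bullet> h = 0)" using orth_proj_char[OF assms] .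
  have b: "orth_proj H y \<in> H \<and> (\<forall>h\<in>H. (y - orth_proj H y) \<bullet> h = 0)" using orth_proj_char[OF assms] .
  show "orth_proj H (x + y) = orth_proj H x + orth_proj H y"
    apply (rule orth_proj_unique[OF assms])
    using a b assms subspace_add apply blast
    using a b by (simp add: algebra_simps inner_diff_left inner_add_left)
next
  fix c :: real and x :: 'a
  have a: "orth_proj H x \<in> H \<and> (\<forall>h\<in>H. (x - orth_proj H x) \<bullet> h = 0)" using orth_proj_char[OF assms] .
  show "orth_proj H (c *\<^sub>R x) = c *\<^sub>R orth_proj H x"
    apply (rule orth_proj_unique[OF assms])
    using a assms subspace_scale apply blast
    using a by (simp add: algebra_simps inner_diff_left flip: scaleR_diff_right)
qed

lemma orth_proj_idem:
  fixes H :: "'a::euclidean_space set"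
  assumes "subspace H"
  shows "orth_proj H (orth_proj H x) = orth_proj H x"
  using orth_proj_char[OF assms, of x] by (intro orth_proj_unique[OF assms]) auto

lemma refl_linear: "subspace H \<Longrightarrow> linear (refl_sub H)"
proof -
  assume H: "subspace H"
  have L: "linear (orth_proj H)" by (rule orth_proj_linear[OF H])
  show ?thesis unfolding refl_sub_def
    by (rule linearI) (simp_all add: linear_add[OF L] linear_scale[OF L] algebra_simps)
qed

lemma refl_refl: "subspace H \<Longrightarrow> refl_sub H (refl_sub H x) = x"
proof -
  assume H: "subspace H"
  have L: "linear (orth_proj H)" by (rule orth_proj_linear[OF H])
  have "orth_proj H (2 *\<^sub>R orth_proj H x - x) = orth_proj H x"
  proof -
    have "orth_proj H (2 *\<^sub>R orth_proj H x - x) = orth_proj H (2 *\<^sub>R orth_proj H x) - orth_proj H x"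
      by (rule linear_diff[OF L])
    also have "\<dots> = 2 *\<^sub>R orth_proj H (orth_proj H x) - orth_proj H x"
      by (simp only: linear_scale[OF L])
    also have "\<dots> = orth_proj H x" by (simp add: orth_proj_idem[OF H] scaleR_2)
    finally show ?thesis .
  qed
  thus ?thesis unfolding refl_sub_def by (simp add: algebra_simps)
qed


fun msums :: "nat \<Rightarrow> 'a::real_vector set \<Rightarrow> 'a set" where
  "msums 0 B = {0}"
| "msums (Suc n) B = {b + s | b s. b \<in> B \<and> s \<in> msums n B}"

lemma sums_add: "a \<in> msums m B \<Longrightarrow> b \<in> msums n B \<Longrightarrow> a + b \<in> msums (m + n) B"
proof (induction m arbitrary: a)
  case 0 then show ?case by simp
next
  case (Suc m)
  then obtain c s where "c \<in> B" "s \<in> msums m B" "a = c + s" by auto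
  with Suc.IH[of s] Suc.prems show ?case by (auto simp: add.assoc)
qed

lemma sums_split: "s \<in> msums (m + n) B \<Longrightarrow> \<exists>a b. a \<in> msums m B \<and> b \<in> msums n B \<and> s = a + b"
proof (induction m arbitrary: s)
  case 0 then show ?case by force
next
  case (Suc m)
  then obtain c t where "c \<in> B" "t \<in> msums (m + n) B" "s = c + t" by auto
  with Suc.IH[of t] obtain a b where "a \<in> msums m B" "b \<in> msums n B" "t = a + b" by blast
  then show ?case using \<open>c \<in> B\<close> \<open>s = c + t\<close>
    by (intro exI[of _ "c + a"] exI[of _ b]) (auto simp: add.assoc)
qed

lemma sums_lin: "linear f \<Longrightarrow> f ` B \<subseteq> B \<Longrightarrow> s \<in> msums n B \<Longrightarrow> f s \<in> msums n B"
proof (induction n arbitrary: s)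
  case 0 then show ?case by (simp add: linear_0)
next
  case (Suc n)
  then obtain c t where ct: "c \<in> B" "t \<in> msums n B" "s = c + t" by auto
  have "f s = f c + f t" using ct Suc.prems by (simp add: linear_add)
  moreover have "f c \<in> B" using ct Suc.prems by auto
  moreover have "f t \<in> msums n B" using ct Suc by auto
  ultimately show ?case by auto
qed

lemma sums_mult: "b \<in> B \<Longrightarrow> of_nat k *\<^sub>R b \<in> msums k B"
proof (induction k)
  case 0 then show ?case by simp
next
  case (Suc k)
  then show ?case by (force simp: algebra_simps)
qed

lemma sums_comb: "finite S \<Longrightarrow> S \<subseteq> B \<Longrightarrow> (\<Sum>x\<in>S. of_nat (k x) *\<^sub>R x) \<in> msums (\<Sum>x\<in>S. k x) B"
proof (induction S rule: finite_induct)
  case empty then show ?case by simp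
next
  case (insert x S)
  then show ?case using sums_add[OF sums_mult[of x B "k x"], of _ "sum k S"] by simp
qed

lemma sums_ne: "B \<noteq> {} \<Longrightarrow> msums n B \<noteq> {}"
  by (induction n) auto

lemma approx:
  fixes B :: "'a::euclidean_space set"
  assumes "\<forall>b\<in>B. norm b \<le> r" "r \<ge> 0" "B \<noteq> {}" "N \<ge> 1" "l \<in> convex hull B"
  shows "\<exists>t\<in>(\<lambda>s. (1 / real N) *\<^sub>R s) ` msums N B. dist l t \<le> 2 * real (DIM('a) + 1) * r / real N"
proof -
  obtain S u where S: "finite S" "S \<subseteq> B" "card S \<le> DIM('a) + 1" "\<forall>x\<in>S. 0 \<le> u x" "sum u S = 1"
    "(\<Sum>v\<in>S. u v *\<^sub>R v) = l"
    using assms(5) unfolding convex_hull_caratheodory by blast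
  obtain b0 where b0: "b0 \<in> B" using assms(3) by blast
  define k where "k x = nat \<lfloor>real N * u x\<rfloor>" for x
  have k1: "real (k x) \<le> real N * u x" if "x \<in> S" for x
    using S(4) that by (simp add: k_def)
  have k2: "real N * u x - 1 \<le> real (k x)" if "x \<in> S" for x
    using S(4) that by (simp add: k_def)
  have "real (sum k S) \<le> real N"
  proof -
    have "real (sum k S) = (\<Sum>x\<in>S. real (k x))" by simp
    also have "\<dots> \<le> (\<Sum>x\<in>S. real N * u x)" by (rule sum_mono) (use k1 in auto)
    also have "\<dots> = real N" using S(5) by (simp add: sum_distrib_left[symmetric])
    finally show ?thesis .
  qed
  hence kN: "sum k S \<le> N" by (simp only: of_nat_le_iff)
  define d where "d = N - sum k S"
  have dN: "real d = real N - real (sum k S)" using kN by (simp add: d_def)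
  define s where "s = (\<Sum>x\<in>S. of_nat (k x) *\<^sub>R x) + of_nat d *\<^sub>R b0"
  have "s \<in> msums (sum k S + d) B"
    unfolding s_def by (rule sums_add[OF sums_comb[OF S(1) S(2)] sums_mult[OF b0]])
  hence sin: "s \<in> msums N B" using kN by (simp add: d_def)
  define e where "e x = u x - real (k x) / real N" for x
  have Npos: "real N > 0" using assms(4) by simp
  have e0: "0 \<le> e x" "e x \<le> 1 / real N" if "x \<in> S" for x
  proof -
    have ex: "e x = (real N * u x - real (k x)) / real N" using Npos by (simp add: e_def field_simps)
    show "0 \<le> e x" unfolding ex using k1[OF that] Npos by simp
    show "e x \<le> 1 / real N" unfolding ex using k2[OF that] Npos by (intro divide_right_mono) auto
  qed
  have se: "sum e S = real d / real N"
  proof -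
    have "sum e S = sum u S - (\<Sum>x\<in>S. real (k x)) / real N"
      by (simp add: e_def sum_subtractf sum_divide_distrib[symmetric])
    also have "\<dots> = (real N - real (sum k S)) / real N" using S(5) Npos by (simp add: field_simps)
    finally show ?thesis using dN by simp
  qed
  have diff: "l - (1 / real N) *\<^sub>R s = (\<Sum>x\<in>S. e x *\<^sub>R x) - (real d / real N) *\<^sub>R b0"
    unfolding s_def e_def S(6)[symmetric]
    by (simp add: scaleR_sum_right scaleR_diff_left sum_subtractf algebra_simps)
  have "norm (\<Sum>x\<in>S. e x *\<^sub>R x) \<le> (\<Sum>x\<in>S. norm (e x *\<^sub>R x))" by (rule norm_sum)
  also have "\<dots> \<le> (\<Sum>x\<in>S. e x * r)"
    by (rule sum_mono) (use e0 assms(1) S(2) in \<open>auto intro!: mult_left_mono\<close>)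
  also have "\<dots> = sum e S * r" by (simp add: sum_distrib_right)
  finally have n1: "norm (\<Sum>x\<in>S. e x *\<^sub>R x) \<le> sum e S * r" .
  have n2: "norm ((real d / real N) *\<^sub>R b0) \<le> sum e S * r"
    using se b0 assms(1) Npos by (auto intro!: mult_left_mono divide_right_mono)
  have "sum e S \<le> (\<Sum>x\<in>S. 1 / real N)" by (rule sum_mono) (use e0 in auto)
  also have "\<dots> = real (card S) / real N" by simp
  also have "\<dots> \<le> real (DIM('a) + 1) / real N"
    using S(3) Npos by (simp add: divide_right_mono del: of_nat_Suc)
  finally have seb: "sum e S \<le> real (DIM('a) + 1) / real N" .
  have "dist l ((1 / real N) *\<^sub>R s) = norm ((\<Sum>x\<in>S. e x *\<^sub>R x) - (real d / real N) *\<^sub>R b0)"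
    by (simp add: dist_norm diff)
  also have "\<dots> \<le> 2 * (sum e S * r)" using norm_triangle_ineq4 n1 n2
    by (smt (verit))
  also have "\<dots> \<le> 2 * (real (DIM('a) + 1) / real N * r)"
    using seb assms(2) by (intro mult_left_mono mult_right_mono) auto
  also have "\<dots> = 2 * real (DIM('a) + 1) * r / real N" by simp
  finally show ?thesis using sin by (intro bexI[of _ "(1 / real N) *\<^sub>R s"]) auto
qed


lemma mink_sym_alt: "mink_sym H C = {(1/2) *\<^sub>R (x + refl_sub H y) | x y. x \<in> C \<and> y \<in> C}"
  unfolding mink_sym_def set_scale_def mink_sum_def by blast

lemma RB:
  assumes H: "subspace H"
  shows "refl_sub H ` mink_sym H K = mink_sym H K"
proof -
  have L: "linear (refl_sub H)" by (rule refl_linear[OF H])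
  have *: "refl_sub H ((1/2) *\<^sub>R (x + refl_sub H y)) = (1/2) *\<^sub>R (y + refl_sub H x)" for x y
    using refl_refl[OF H] by (simp add: linear_scale[OF L] linear_add[OF L] algebra_simps)
  have sub: "refl_sub H ` mink_sym H K \<subseteq> mink_sym H K"
    unfolding mink_sym_alt using * by auto
  moreover have "mink_sym H K \<subseteq> refl_sub H ` mink_sym H K"
  proof
    fix b assume "b \<in> mink_sym H K"
    hence "refl_sub H b \<in> mink_sym H K" using sub by auto
    thus "b \<in> refl_sub H ` mink_sym H K" using refl_refl[OF H, of b] by (metis image_eqI)
  qed
  ultimately show ?thesis by blast
qed

lemma compactB:
  fixes K H :: "'a::euclidean_space set"
  assumes H: "subspace H" and K: "compact K"
  shows "compact (mink_sym H K)"
proof -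
  have L: "linear (refl_sub H)" by (rule refl_linear[OF H])
  have "continuous_on UNIV (refl_sub H)" using L by (simp add: linear_continuous_on linear_conv_bounded_linear)
  hence "compact (refl_sub H ` K)" using K by (meson compact_continuous_image continuous_on_subset subset_UNIV)
  hence "compact {x + y | x y. x \<in> K \<and> y \<in> refl_sub H ` K}" using K by (intro compact_sums)
  hence "compact ((\<lambda>x. (1/2) *\<^sub>R x) ` {x + y | x y. x \<in> K \<and> y \<in> refl_sub H ` K})" by (rule compact_scaling)
  moreover have "(\<lambda>x. (1/2) *\<^sub>R x) ` {x + y | x y. x \<in> K \<and> y \<in> refl_sub H ` K} = mink_sym H K"
    unfolding mink_sym_def set_scale_def mink_sum_def by blast
  ultimately show ?thesis by simp
qed

lemma RL:
  assumes H: "subspace H"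
  shows "refl_sub H ` (convex hull mink_sym H K) = convex hull mink_sym H K"
  using convex_hull_linear_image[OF refl_linear[OF H]] RB[OF H] by metis

lemma upper:
  assumes H: "subspace H"
  shows "(mink_sym H ^^ Suc n) K \<subseteq> convex hull mink_sym H K"
proof (induction n)
  case 0 then show ?case by (simp add: hull_subset)
next
  case (Suc n)
  let ?L = "convex hull mink_sym H K"
  let ?C = "(mink_sym H ^^ Suc n) K"
  have "mink_sym H ?C \<subseteq> ?L"
  proof
    fix t assume "t \<in> mink_sym H ?C"
    then obtain x y where xy: "x \<in> ?C" "y \<in> ?C" "t = (1/2) *\<^sub>R (x + refl_sub H y)"
      unfolding mink_sym_alt by blast
    have "x \<in> ?L" "refl_sub H y \<in> ?L" using xy Suc RL[OF H, of K] by auto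
    hence "(1/2) *\<^sub>R x + (1/2) *\<^sub>R refl_sub H y \<in> ?L"
      by (intro convexD[OF convex_convex_hull]) auto
    thus "t \<in> ?L" using xy by (simp add: scaleR_right_distrib)
  qed
  thus ?case by simp
qed

lemma lower:
  assumes H: "subspace H"
  shows "(\<lambda>s. (1 / 2^n) *\<^sub>R s) ` msums (2^n) (mink_sym H K) \<subseteq> (mink_sym H ^^ Suc n) K"
proof (induction n)
  case 0
  show ?case by auto
next
  case (Suc n)
  let ?B = "mink_sym H K"
  let ?C = "(mink_sym H ^^ Suc n) K"
  have L: "linear (refl_sub H)" by (rule refl_linear[OF H])
  show ?case
  proof
    fix t assume "t \<in> (\<lambda>s. (1 / 2^Suc n) *\<^sub>R s) ` msums (2^Suc n) ?B"
    then obtain s where s0: "s \<in> msums (2^Suc n) ?B" and s: "t = (1 / 2^Suc n) *\<^sub>R s" by blast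
    have "(2::nat)^Suc n = 2^n + 2^n" by simp
    hence s1: "s \<in> msums (2^n + 2^n) ?B" using s0 by metis
    then obtain a b where ab: "a \<in> msums (2^n) ?B" "b \<in> msums (2^n) ?B" "s = a + b"
      using sums_split[OF s1] by blast
    have Rb: "refl_sub H b \<in> msums (2^n) ?B" by (rule sums_lin[OF L _ ab(2)]) (simp add: RB[OF H])
    have x: "(1 / 2^n) *\<^sub>R a \<in> ?C" using Suc ab(1) by auto
    have y: "refl_sub H ((1 / 2^n) *\<^sub>R b) \<in> ?C"
      using Suc Rb by (auto simp: linear_scale[OF L])
    have "t = (1/2) *\<^sub>R ((1 / 2^n) *\<^sub>R a + refl_sub H (refl_sub H ((1 / 2^n) *\<^sub>R b)))"
      using s ab(3) refl_refl[OF H] by (simp add: scaleR_right_distrib)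
    hence "t \<in> mink_sym H ?C" unfolding mink_sym_alt[of H ?C] using x y by blast
    thus "t \<in> (mink_sym H ^^ Suc (Suc n)) K" by simp
  qed
qed


theorem theorem6:
  fixes K H :: "'a::euclidean_space set"
  assumes "compact K" and "K \<noteq> {}"
    and "subspace H" and "1 \<le> dim H" and "dim H \<le> DIM('a) - 1"
  shows "compact (convex hull (mink_sym H K))
       \<and> convex (convex hull (mink_sym H K))
       \<and> refl_sub H ` (convex hull (mink_sym H K)) = convex hull (mink_sym H K)
       \<and> (\<lambda>m. hausdorff_dist ((mink_sym H ^^ m) K) (convex hull (mink_sym H K))) \<longlonglongrightarrow> 0"
proof -
  note H = assms(3)
  define B where "B = mink_sym H K"
  define L where "L = convex hull B"
  have cB: "compact B" unfolding B_def by (rule compactB[OF H assms(1)])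
  have Bne: "B \<noteq> {}" using assms(2) unfolding B_def mink_sym_alt by blast
  have Lne: "L \<noteq> {}" using Bne hull_subset[of B convex] unfolding L_def by blast
  obtain r where r: "r > 0" "\<forall>b\<in>B. norm b \<le> r" using bounded_pos compact_imp_bounded[OF cB] by blast
  define c where "c = 2 * real (DIM('a) + 1) * r"
  have bound: "0 \<le> hausdorff_dist ((mink_sym H ^^ Suc n) K) L \<and>
      hausdorff_dist ((mink_sym H ^^ Suc n) K) L \<le> c / 2^n" for n
  proof -
    define C where "C = (mink_sym H ^^ Suc n) K"
    define N :: nat where "N = 2^n"
    have N1: "N \<ge> 1" unfolding N_def by simp
    have TC: "(\<lambda>s. (1 / real N) *\<^sub>R s) ` msums N B \<subseteq> C"
      using lower[OF H, of n K] unfolding C_def N_def B_def by simp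
    have Cne: "C \<noteq> {}" using TC sums_ne[OF Bne, of N] by blast
    have CL: "C \<subseteq> L" using upper[OF H, of n K] unfolding C_def L_def B_def .
    have s1: "(\<lambda>a. infdist a L) ` C = {0}"
    proof -
      obtain x where x: "x \<in> C" using Cne by blast
      have "infdist x L = 0" using x CL by (intro infdist_zero) auto
      hence "0 \<in> (\<lambda>a. infdist a L) ` C" using x by (metis image_eqI)
      moreover have "(\<lambda>a. infdist a L) ` C \<subseteq> {0}" using CL by (auto intro: infdist_zero)
      ultimately show ?thesis by blast
    qed
    have s2: "(SUP l\<in>L. infdist l C) \<le> c / real N"
    proof (rule cSUP_least[OF Lne])
      fix l assume "l \<in> L"
      then obtain t where t: "t \<in> (\<lambda>s. (1 / real N) *\<^sub>R s) ` msums N B" "dist l t \<le> c / real N"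
        using approx[OF r(2) less_imp_le[OF r(1)] Bne N1] unfolding L_def c_def by blast
      have "infdist l C \<le> dist l t" using t(1) TC by (intro infdist_le) auto
      thus "infdist l C \<le> c / real N" using t(2) by simp
    qed
    have "c \<ge> 0" using r unfolding c_def by simp
    hence "c / real N \<ge> 0" by simp
    hence "hausdorff_dist C L \<le> c / real N \<and> 0 \<le> hausdorff_dist C L"
      unfolding hausdorff_dist_def s1 using s2 by simp
    thus ?thesis unfolding C_def N_def by simp
  qed
  have lim0: "(\<lambda>n. c / 2^n :: real) \<longlonglongrightarrow> 0"
    by (rule LIMSEQ_divide_realpow_zero) simp
  have "(\<lambda>n. hausdorff_dist ((mink_sym H ^^ Suc n) K) L) \<longlonglongrightarrow> 0"
    by (rule tendsto_sandwich[OF _ _ tendsto_const lim0]) (use bound in auto)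
  hence lim: "(\<lambda>m. hausdorff_dist ((mink_sym H ^^ m) K) L) \<longlonglongrightarrow> 0"
    by (rule LIMSEQ_imp_Suc)
  have "compact L" unfolding L_def by (rule compact_convex_hull[OF cB])
  moreover have "convex L" unfolding L_def by simp
  moreover have "refl_sub H ` L = L" unfolding L_def B_def by (rule RL[OF H])
  ultimately have "compact L \<and> convex L \<and> refl_sub H ` L = L \<and> (\<lambda>m. hausdorff_dist ((mink_sym H ^^ m) K) L) \<longlonglongrightarrow> 0"
    using lim by blast
  thus ?thesis unfolding L_def B_def .
qed

end
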